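(* Let $\beta>0$ and let $A$ be a real random variable with $\Pr(0\le A<a_{\max})=1$ for some $a_{\max}>0$. Let $\eta\in(0,1]$ be the solution of $\beta=\dfrac{1-\eta}{1-\mathbb E\{1/(1+\eta A)\}}$. If $\beta\,\mathbb E\Big\{\dfrac{\eta A}{1+\eta A}\Big\}<\dfrac12$, then $$\Psi(A,\beta)\le \beta\log(1+a_{\max})+\log e\cdot\Big(\beta\,\frac{a_{\max}}{1+a_{\max}}\Big)^2.$$
   Context: Logarithms are base 2. For a nonnegative real random variable $A$ and $\beta>0$, $\Psi(A,\beta)=\beta\,\mathbb E\{\log(1+\eta A)\}-\log\eta+(\eta-1)\log e$, where $\eta\in(0,1]$ is the solution of $\beta=\dfrac{1-\eta}{1-\mathbb E\{1/(1+\eta A)\}}$ (equivalently $\eta=1-\beta\,\mathbb E\{\eta A/(1+\eta A)\}$). *)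

theory Defs
  imports "HOL-Probability.Probability"
begin

definition Psi_at :: "'a measure \<Rightarrow> ('a \<Rightarrow> real) \<Rightarrow> real \<Rightarrow> real \<Rightarrow> real" where
  "Psi_at M A \<beta> \<eta> =
     \<beta> * prob_space.expectation M (\<lambda>x. log 2 (1 + \<eta> * A x)) - log 2 \<eta>
     + (\<eta> - 1) * log 2 (exp 1)"

end

theory Submission
  imports Defs
begin

lemma ln_aux:
  fixes t :: real assumes "0 \<le> t" "t \<le> 1/2"
  shows "- ln (1 - t) - t \<le> t^2"
proof -
  define g where "g s = s^2 + s + ln (1 - s)" for s :: real
  have d: "\<And>s. 0 \<le> s \<Longrightarrow> s \<le> 1/2 \<Longrightarrow> DERIV g s :> (2 * s + 1 - 1 / (1 - s))"
    unfolding g_def by (auto intro!: derivative_eq_intros simp: power2_eq_square)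
  have nn: "0 \<le> 2 * s + 1 - 1/(1-s)" if s: "0 \<le> s" "s \<le> 1/2" for s :: real
  proof -
    have "2 * s + 1 - 1/(1-s) = s * (1-2 * s)/(1-s)" using s by (simp add: field_simps)
    moreover have "s * (1-2 * s)/(1-s) \<ge> 0" using s by simp
    ultimately show "0 \<le> 2 * s + 1 - 1/(1-s)" by linarith
  qed
  have "g 0 \<le> g t"
    by (rule DERIV_nonneg_imp_nondecreasing[of 0 t g]) (use assms d nn in \<open>force+\<close>)
  thus ?thesis by (simp add: g_def)
qed

theorem mainTheorem11:
  fixes M :: "'a measure" and A :: "'a \<Rightarrow> real" and \<beta> \<eta> amax :: real
  assumes "prob_space M"
    and "A \<in> borel_measurable M"
    and "\<beta> > 0"
    and "amax > 0"
    and "AE x in M. 0 \<le> A x \<and> A x < amax"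
    and "0 < \<eta>" and "\<eta> \<le> 1"
    and "\<beta> = (1 - \<eta>) / (1 - prob_space.expectation M (\<lambda>x. 1 / (1 + \<eta> * A x)))"
    and "\<beta> * prob_space.expectation M (\<lambda>x. \<eta> * A x / (1 + \<eta> * A x)) < 1 / 2"
  shows "Psi_at M A \<beta> \<eta> \<le>
           \<beta> * log 2 (1 + amax) + log 2 (exp 1) * (\<beta> * amax / (1 + amax))^2"
proof -
  interpret prob_space M by fact
  note [measurable] = assms(2)
  have AEb: "AE x in M. 0 \<le> A x \<and> A x < amax" by fact
  define f where "f x = \<eta> * A x / (1 + \<eta> * A x)" for x
  define m where "m = expectation f"
  have fm[measurable]: "f \<in> borel_measurable M" unfolding f_def by measurable
  have fb: "AE x in M. 0 \<le> f x \<and> f x \<le> amax / (1 + amax) \<and> f x \<le> 1"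
    using AEb
  proof eventually_elim
    case (elim x)
    have ea: "\<eta> * A x \<le> amax" using elim assms(6,7) mult_right_mono[of \<eta> 1 "A x"] by linarith
    have p: "0 \<le> \<eta> * A x" using elim assms(6) by simp
    have "\<eta> * A x * (1 + amax) \<le> amax * (1 + \<eta> * A x)" using ea by (simp add: algebra_simps)
    hence "\<eta> * A x / (1 + \<eta> * A x) \<le> amax / (1 + amax)" using p assms(4) by (simp add: divide_simps)
    moreover have "amax / (1 + amax) \<le> 1" using assms(4) by simp
    ultimately show ?case using p by (simp add: f_def)
  qed
  have fi: "integrable M f"
    apply (rule integrable_const_bound[where B=1])
     apply (rule eventually_mono[OF fb]) apply simp
    by simp
  have "AE x in M. 0 \<le> f x" using fb by auto
  then have m0: "0 \<le> m" unfolding m_def by (rule integral_nonneg_AE)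
  have "m \<le> expectation (\<lambda>x. amax / (1 + amax))"
    unfolding m_def by (rule integral_mono_AE) (use fi fb in \<open>auto elim!: eventually_mono\<close>)
  then have m1: "m \<le> amax / (1 + amax)" by (simp add: prob_space)
  have "expectation (\<lambda>x. 1 / (1 + \<eta> * A x)) = expectation (\<lambda>x. 1 - f x)"
  proof (rule integral_cong_AE)
    show "AE x in M. 1 / (1 + \<eta> * A x) = 1 - f x"
      using AEb
    proof eventually_elim
      case (elim x)
      have "0 < 1 + \<eta> * A x" using elim assms(6) by (simp add: add_pos_nonneg)
      thus ?case by (simp add: f_def field_simps)
    qed
  qed measurable
  also have "\<dots> = 1 - m" unfolding m_def using fi by (simp add: prob_space)
  finally have E1: "expectation (\<lambda>x. 1 / (1 + \<eta> * A x)) = 1 - m" .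
  have bm: "\<beta> = (1 - \<eta>) / m" using assms(8) E1 by simp
  have mne: "m \<noteq> 0" using bm assms(3) by auto
  define t where "t = 1 - \<eta>"
  have t: "t = \<beta> * m" using bm mne by (simp add: t_def field_simps)
  have t0: "0 \<le> t" "t \<le> 1/2" using t assms(9) m0 assms(3) unfolding f_def[symmetric] m_def[symmetric]
    by auto
  have tb: "t \<le> \<beta> * amax / (1 + amax)" using t mult_left_mono[OF m1, of \<beta>] assms(3) by simp
  have t2: "t^2 \<le> (\<beta> * amax / (1 + amax))^2" using t0 tb by (simp add: power_mono)
  have lb: "AE x in M. 0 \<le> log 2 (1 + \<eta> * A x) \<and> log 2 (1 + \<eta> * A x) \<le> log 2 (1 + amax)"
    using AEb
  proof eventually_elim
    case (elim x)
    have ea: "\<eta> * A x \<le> amax" using elim assms(6,7) mult_right_mono[of \<eta> 1 "A x"] by linarith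
    have p: "0 \<le> \<eta> * A x" using elim assms(6) by simp
    show ?case using ea p by simp
  qed
  have li: "integrable M (\<lambda>x. log 2 (1 + \<eta> * A x))"
    apply (rule integrable_const_bound[where B="log 2 (1 + amax)"])
     apply (rule eventually_mono[OF lb]) apply simp
    by simp
  have "expectation (\<lambda>x. log 2 (1 + \<eta> * A x)) \<le> expectation (\<lambda>x. log 2 (1 + amax))"
    by (rule integral_mono_AE) (use li lb in \<open>auto elim!: eventually_mono\<close>)
  then have El: "expectation (\<lambda>x. log 2 (1 + \<eta> * A x)) \<le> log 2 (1 + amax)" by (simp add: prob_space)
  have key: "- log 2 \<eta> + (\<eta> - 1) * log 2 (exp 1) \<le> log 2 (exp 1) * t^2"
  proof -
    have "- ln (1 - t) - t \<le> t^2" by (rule ln_aux) (use t0 in auto)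
    hence "(- ln \<eta> + (\<eta> - 1)) / ln 2 \<le> t^2 / ln 2" by (simp add: t_def divide_right_mono)
    thus ?thesis by (simp add: log_def diff_divide_distrib add_divide_distrib)
  qed
  have "Psi_at M A \<beta> \<eta> \<le> \<beta> * log 2 (1 + amax) + log 2 (exp 1) * t^2"
    unfolding Psi_at_def using El key assms(3) mult_left_mono[OF El, of \<beta>] by linarith
  also have "\<dots> \<le> \<beta> * log 2 (1 + amax) + log 2 (exp 1) * (\<beta> * amax / (1 + amax))^2"
    using t2 by (simp add: divide_right_mono)
  finally show ?thesis .
qed

end
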